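(* Let $q$ be a prime power and $b,k,t$ positive integers with $t\ge\lceil\frac{9+b}{2}\rceil$ and $b\le k\le(2t-b+1)^2$. Then \[ r_b^{wt_b}(k,t)\le\frac{q(2t-b)}{q\left(1-\sqrt{\frac{\ln(2t-b+1)}{2t-b+1}}\right)-1}. \]
   Context: For $\boldsymbol{z}=(z_0,\ldots,z_{n-1}),\boldsymbol{w}\in\mathbb{F}_q^n$, $d_b(\boldsymbol{z},\boldsymbol{w})$ is the number of $i\in\{0,\ldots,n-1\}$ with $(z_i,\ldots,z_{i+b-1})\ne(w_i,\ldots,w_{i+b-1})$ (indices mod $n$), and $wt_b(\boldsymbol{x})=d_b(\boldsymbol{x},\boldsymbol{0})$ is the $b$-symbol weight function on $\mathbb{F}_q^k$. A systematic encoding $\mathrm{Enc}(\boldsymbol{x})=(\boldsymbol{x},p(\boldsymbol{x}))\in\mathbb{F}_q^{k+r}$ is a function-correcting $b$-symbol code for $f$ if $d_b(\mathrm{Enc}(\boldsymbol{x}_1),\mathrm{Enc}(\boldsymbol{x}_2))\ge 2t+1$ whenever $f(\boldsymbol{x}_1)\ne f(\boldsymbol{x}_2)$; $r_b^f(k,t)$ is the smallest $r$ for which one exists. *)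

theory Defs
  imports Complex_Main
begin

text \<open>Vectors in F_q^n are lists of length n; indices are taken cyclically mod n.\<close>

definition bsym_dist :: "nat \<Rightarrow> 'a list \<Rightarrow> 'a list \<Rightarrow> nat" where
  "bsym_dist b z w = (let n = length z in
     card {i. i < n \<and> (\<exists>j<b. z ! ((i + j) mod n) \<noteq> w ! ((i + j) mod n))})"

definition bsym_wt :: "nat \<Rightarrow> 'a::zero list \<Rightarrow> nat" where
  "bsym_wt b x = bsym_dist b x (replicate (length x) 0)"

text \<open>Systematic encoding x \<mapsto> (x, p x) with p : F_q^k \<rightarrow> F_q^r is a
  function-correcting b-symbol code for f with parameter t.\<close>

definition is_fc_bsym_code ::
  "nat \<Rightarrow> nat \<Rightarrow> nat \<Rightarrow> nat \<Rightarrow> ('a list \<Rightarrow> 'c) \<Rightarrow> ('a list \<Rightarrow> 'a list) \<Rightarrow> bool" where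
  "is_fc_bsym_code b k t r f p \<longleftrightarrow>
     (\<forall>x. length x = k \<longrightarrow> length (p x) = r) \<and>
     (\<forall>x1 x2. length x1 = k \<longrightarrow> length x2 = k \<longrightarrow> f x1 \<noteq> f x2 \<longrightarrow>
        bsym_dist b (x1 @ p x1) (x2 @ p x2) \<ge> 2 * t + 1)"

definition fc_bsym_redundancy ::
  "'a itself \<Rightarrow> nat \<Rightarrow> ('a list \<Rightarrow> 'c) \<Rightarrow> nat \<Rightarrow> nat \<Rightarrow> nat" where
  "fc_bsym_redundancy _ b f k t = (LEAST r. \<exists>p :: 'a list \<Rightarrow> 'a list. is_fc_bsym_code b k t r f p)"

end

theory Submission
  imports Defs "HOL-Probability.Hoeffding"
begin


lemma ln10_bounds: "2 < ln (10::real)" "ln (10::real) < 5/2"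
proof -
  have "exp (2::real) = exp 1 ^ 2" by (simp add: exp_of_nat_mult[symmetric])
  also have "\<dots> \<le> 3 ^ 2" using exp_le by (intro power_mono) auto
  finally have "exp (2::real) < 10" by simp
  then show "2 < ln (10::real)" by (metis exp_less_cancel_iff exp_ln zero_less_numeral)
  have "(1.1::real) ^ 25 \<le> exp (0.1) ^ 25"
    using exp_ge_add_one_self[of "0.1::real"] by (intro power_mono) auto
  also have "\<dots> = exp (5/2)" by (simp add: exp_of_nat_mult[symmetric])
  finally have "(1.1::real) ^ 25 \<le> exp (5/2)" .
  moreover have "(10::real) < 1.1 ^ 25" by (simp add: power_numeral_reduce)
  ultimately have "10 < exp (5/2::real)" by linarith
  then show "ln (10::real) < 5/2" by (metis exp_less_cancel_iff exp_ln zero_less_numeral)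
qed

lemma lnN_bounds:
  fixes N :: real assumes N: "N \<ge> 10"
  shows "ln N > 2" "ln N / N < 1/4"
proof -
  show "ln N > 2" using ln10_bounds(1) N by (smt (verit) ln_le_cancel_iff)
  have "ln (N/10) \<le> N/10 - 1" using N by (intro ln_le_minus_one) auto
  moreover have "ln (N/10) = ln N - ln 10" using N by (simp add: ln_div)
  ultimately have "ln N < N/4" using ln10_bounds(2) N by linarith
  then show "ln N / N < 1/4" using N by (simp add: divide_simps)
qed

lemma key_real:
  fixes N q :: real and k r :: nat
  assumes N: "N \<ge> 10" and q: "q \<ge> 2" and k: "real k \<le> N^2" "k > 0"
  defines "\<epsilon> \<equiv> sqrt (ln N / N)"
  defines "R \<equiv> q*(N-1)/(q*(1-\<epsilon>)-1)"
  assumes r: "r = nat \<lfloor>R\<rfloor>"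
  shows "real r \<le> R" "\<exists>h\<ge>0. real k * (exp (h*(N-1)) * (1+(q-1)*exp(-h))^r) < q^r"
proof -
  note lb = lnN_bounds[OF N]
  define u where "u = 1/q"
  have u: "0 < u" "u \<le> 1/2" using q by (auto simp: u_def)
  have e2: "\<epsilon>^2 = ln N / N" unfolding \<epsilon>_def using lb N by simp
  have epos: "\<epsilon> > 0" unfolding \<epsilon>_def using lb N by simp
  have "\<epsilon>^2 < (1/2)^2" using e2 lb(2) by (simp add: power2_eq_square)
  hence elt: "\<epsilon> < 1/2" by (rule power_less_imp_less_base) auto
  define P where "P = 1 - u - \<epsilon>"
  have P: "P > 0" using u elt by (simp add: P_def)
  have Rdef: "R = (N-1)/P"
  proof -
    have "q*(1-\<epsilon>)-1 = q * P" using q by (simp add: P_def u_def field_simps)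
    thus ?thesis unfolding R_def using q by simp
  qed
  have RP: "R * P = N - 1" using P by (simp add: Rdef)
  have Rpos: "R > 0" using P N by (simp add: Rdef)
  have NE: "N * \<epsilon>^2 = ln N" using e2 N by simp
  have R1: "R * (1 - \<epsilon>) \<ge> N - 1" using RP Rpos u unfolding P_def
    by (smt (verit) mult_left_mono)
  have "(R - N) * (1 - \<epsilon>) \<ge> N*\<epsilon> - 1" using R1 by (simp add: algebra_simps)
  hence "\<epsilon> * ((R - N) * (1 - \<epsilon>)) \<ge> \<epsilon> * (N*\<epsilon> - 1)" using epos
    by (intro mult_left_mono) auto
  also have "\<epsilon> * (N*\<epsilon> - 1) = ln N - \<epsilon>" using NE by (simp add: power2_eq_square algebra_simps)
  finally have "(\<epsilon> * (R - N)) * (1 - \<epsilon>) \<ge> 2 * (1 - \<epsilon>)" using lb elt epos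
    by (simp add: algebra_simps; linarith)
  moreover have "1 - \<epsilon> > 0" using elt by simp
  ultimately have eRN: "\<epsilon> * (R - N) \<ge> 2" using mult_le_cancel_right_pos by blast
  have RN: "R \<ge> N" using eRN epos by (smt (verit) mult_nonneg_nonpos)
  have "R*\<epsilon> = \<epsilon>*(R-N) + \<epsilon>*N" by (simp add: algebra_simps)
  moreover have "\<epsilon>*N > 0" using epos N by simp
  ultimately have Re: "R * \<epsilon> \<ge> 2" using eRN by linarith
  have fl: "real r \<le> R" "real r > R - 1" using r Rpos by linarith+
  show "real r \<le> R" by (fact fl(1))
  have rpos: "real r > 0" using fl RN N by linarith
  define \<delta> where "\<delta> = real r * (1-u) - (N-1)"
  have "R * (1 - u) = N - 1 + R * \<epsilon>" using RP unfolding P_def by (simp add: algebra_simps)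
  hence "\<delta> = R*\<epsilon> - (R - real r) * (1-u)" unfolding \<delta>_def by (simp add: algebra_simps)
  moreover have "(R - real r) * (1-u) \<le> 1" using fl u
    by (intro mult_le_one) auto
  ultimately have dge: "\<delta> \<ge> R*\<epsilon> - 1" by linarith
  have "(R*\<epsilon> - 1)^2 - R * ln N = R*\<epsilon>*(\<epsilon>*(R-N) - 2) + 1"
    using NE by (simp add: power2_eq_square algebra_simps)
  also have "\<dots> > 0" using eRN Rpos epos by (smt (verit) mult_nonneg_nonneg)
  finally have "(R*\<epsilon> - 1)^2 > R * ln N" by simp
  moreover have "\<delta>^2 \<ge> (R*\<epsilon> - 1)^2" using dge Re by (intro power_mono) auto
  moreover have "R * ln N \<ge> real r * ln N" using fl lb by (intro mult_right_mono) auto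
  ultimately have dr: "\<delta>^2 > real r * ln N" by linarith
  have dpos: "\<delta> \<ge> 0" using dge Re by linarith
  define h where "h = 4 * \<delta> / real r"
  have h0: "h \<ge> 0" using dpos rpos by (simp add: h_def)
  have base: "1+(q-1)*exp(-h) = q * exp (-h) * (1 + u * (exp h - 1))"
    using q by (simp add: u_def field_simps exp_minus)
  have hl: "-h*u + ln (1 + u*(exp h - 1)) \<le> h^2/8"
    using Hoeffdings_lemma_aux[of h u] h0 u by simp
  have pos1: "1 + u*(exp h - 1) > 0" using u h0 by (smt (verit) mult_nonneg_nonneg one_le_exp_iff)
  have "1 + u*(exp h - 1) = exp (ln (1 + u*(exp h - 1)))" using pos1 by simp
  also have "\<dots> \<le> exp (h*u + h^2/8)" using hl by simp
  finally have "1+(q-1)*exp(-h) \<le> q * exp (-h) * exp (h*u + h^2/8)"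
    unfolding base using q by (intro mult_left_mono) auto
  also have "\<dots> = q * exp (-h + h*u + h^2/8)" by (simp add: exp_add[symmetric])
  finally have "(1+(q-1)*exp(-h))^r \<le> (q * exp (-h + h*u + h^2/8))^r"
    using q by (intro power_mono) (auto intro!: add_nonneg_nonneg)
  also have "\<dots> = q^r * exp (real r * (-h + h*u + h^2/8))"
    by (simp add: power_mult_distrib exp_of_nat_mult[symmetric])
  finally have "exp (h*(N-1)) * (1+(q-1)*exp(-h))^r \<le> exp (h*(N-1)) * (q^r * exp (real r * (-h + h*u + h^2/8)))"
    by (intro mult_left_mono) auto
  also have "\<dots> = q^r * exp (h*(N-1) + real r * (-h + h*u + h^2/8))"
    by (simp add: exp_add)
  also have "h*(N-1) + real r * (-h + h*u + h^2/8) = - 2 * \<delta>^2 / real r"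
    using rpos unfolding h_def \<delta>_def by (simp add: field_simps power2_eq_square)
  finally have B: "exp (h*(N-1)) * (1+(q-1)*exp(-h))^r \<le> q^r * exp (- 2 * \<delta>^2 / real r)" .
  have "real k * exp (- 2 * \<delta>^2 / real r) \<le> N^2 * exp (- 2 * \<delta>^2 / real r)"
    using k by (intro mult_right_mono) auto
  also have "N^2 = exp (2 * ln N)"
  proof -
    have "exp (2*ln N) = exp (ln N)^2" using exp_of_nat_mult[of 2 "ln N"] by simp
    thus ?thesis using N by simp
  qed
  also have "exp (2 * ln N) * exp (- 2 * \<delta>^2 / real r) = exp (2 * ln N - 2 * \<delta>^2 / real r)"
    by (simp add: exp_add[symmetric])
  also have "\<dots> < 1"
  proof -
    have "ln N < \<delta>^2 / real r" using dr rpos by (simp add: field_simps)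
    thus ?thesis by simp
  qed
  finally have kk: "real k * exp (- 2 * \<delta>^2 / real r) < 1" .
  have "real k * (exp (h*(N-1)) * (1+(q-1)*exp(-h))^r) \<le> real k * (q^r * exp (- 2 * \<delta>^2 / real r))"
    using B by (intro mult_left_mono) auto
  also have "\<dots> = q^r * (real k * exp (- 2 * \<delta>^2 / real r))" by simp
  also have "\<dots> < q^r * 1" using kk q by (intro mult_strict_left_mono) auto
  finally show "\<exists>h\<ge>0. real k * (exp (h*(N-1)) * (1+(q-1)*exp(-h))^r) < q^r" using h0 by auto
qed



definition hdist :: "'a list \<Rightarrow> 'a list \<Rightarrow> nat" where
  "hdist c y = card {i. i < length c \<and> c ! i \<noteq> y ! i}"

lemma hdist_Cons: "hdist (c # cs) (z # ys) = (if c \<noteq> z then 1 else 0) + hdist cs ys"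
proof -
  have "{i. i < length (c#cs) \<and> (c#cs) ! i \<noteq> (z#ys) ! i} =
        (if c \<noteq> z then {0} else {}) \<union> Suc ` {i. i < length cs \<and> cs ! i \<noteq> ys ! i}"
  proof (intro set_eqI iffI)
    fix i assume "i \<in> {i. i < length (c#cs) \<and> (c#cs) ! i \<noteq> (z#ys) ! i}"
    then show "i \<in> (if c \<noteq> z then {0} else {}) \<union> Suc ` {i. i < length cs \<and> cs ! i \<noteq> ys ! i}"
      by (cases i) auto
  next
    fix i assume "i \<in> (if c \<noteq> z then {0} else {}) \<union> Suc ` {i. i < length cs \<and> cs ! i \<noteq> ys ! i}"
    then show "i \<in> {i. i < length (c#cs) \<and> (c#cs) ! i \<noteq> (z#ys) ! i}"
      by (auto split: if_splits)
  qed
  moreover have "card (Suc ` {i. i < length cs \<and> cs ! i \<noteq> ys ! i}) = hdist cs ys"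
    unfolding hdist_def by (simp add: card_image)
  ultimately show ?thesis unfolding hdist_def by (auto simp: card_insert_if)
qed

lemma hdist_sym: "length a = length b \<Longrightarrow> hdist a b = hdist b a"
  unfolding hdist_def by (metis)

lemma lists_Suc: "{y :: 'a list. length y = Suc n} = (\<lambda>(z, ys). z # ys) ` (UNIV \<times> {ys. length ys = n})"
  by (auto simp: length_Suc_conv image_def)

lemma sum_exp_hdist:
  fixes h :: real
  shows "(\<Sum>y\<in>{y :: 'a::finite list. length y = length c}. exp (- (h * real (hdist c y))))
         = (1 + (real CARD('a) - 1) * exp (-h)) ^ length c"
proof (induction c)
  case Nil
  have "{y :: 'a list. length y = 0} = {[]}" by auto
  then show ?case by (simp add: hdist_def)
next
  case (Cons c cs)
  have inj: "inj_on (\<lambda>(z, ys). z # ys) (UNIV \<times> {ys :: 'a list. length ys = length cs})"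
    by (auto simp: inj_on_def)
  have fin: "finite {ys :: 'a list. length ys = length cs}"
    using finite_lists_length_eq[of "UNIV :: 'a set"] by simp
  have "(\<Sum>y\<in>{y :: 'a list. length y = length (c#cs)}. exp (- h * hdist (c#cs) y))
      = (\<Sum>(z,ys)\<in>UNIV \<times> {ys. length ys = length cs}. exp (- h * hdist (c#cs) (z#ys)))"
    unfolding length_Cons lists_Suc by (subst sum.reindex[OF inj]) (simp add: case_prod_unfold o_def)
  also have "\<dots> = (\<Sum>z\<in>UNIV. \<Sum>ys\<in>{ys. length ys = length cs}.
                   exp (- h * (if c \<noteq> z then 1 else 0)) * exp (- h * hdist cs ys))"
    by (subst sum.cartesian_product[symmetric]) (auto intro!: sum.cong simp: hdist_Cons exp_add[symmetric] algebra_simps)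
  also have "\<dots> = (\<Sum>z\<in>UNIV. exp (- h * (if c \<noteq> z then 1 else 0))) *
                   (1 + (real CARD('a) - 1) * exp (-h)) ^ length cs"
    by (simp add: sum_distrib_left[symmetric] Cons sum_distrib_right)
  also have "(\<Sum>z\<in>UNIV. exp (- h * (if c \<noteq> z then 1 else 0))) = 1 + (real CARD('a) - 1) * exp (-h)"
  proof -
    have "(\<Sum>z\<in>UNIV. exp (- h * (if c \<noteq> z then 1 else 0))) =
          exp (- h * (if c \<noteq> c then 1 else 0)) + (\<Sum>z\<in>UNIV - {c}. exp (- h * (if c \<noteq> z then 1 else 0)))"
      by (subst sum.remove[of _ c]) auto
    also have "(\<Sum>z\<in>UNIV - {c}. exp (- h * (if c \<noteq> z then 1 else 0))) = (\<Sum>z\<in>UNIV - {c}. exp (-h))"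
      by (intro sum.cong) auto
    also have "\<dots> = (real CARD('a) - 1) * exp (-h)"
      by (simp add: card_Diff_singleton of_nat_diff)
    finally show ?thesis by simp
  qed
  finally show ?case by simp
qed

lemma ball_card:
  fixes h :: real and c :: "'a::finite list"
  assumes h: "h \<ge> 0"
  shows "real (card {y. length y = length c \<and> hdist c y < N})
         \<le> exp (h * (real N - 1)) * (1 + (real CARD('a) - 1) * exp (-h)) ^ length c"
proof -
  let ?V = "{y :: 'a list. length y = length c}"
  let ?B = "{y. length y = length c \<and> hdist c y < N}"
  have fin: "finite ?V" using finite_lists_length_eq[of "UNIV :: 'a set"] by simp
  have "real (card ?B) = (\<Sum>y\<in>?B. 1)" by simp
  also have "\<dots> \<le> (\<Sum>y\<in>?B. exp (h * (real N - 1)) * exp (- (h * real (hdist c y))))"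
  proof (intro sum_mono)
    fix y assume "y \<in> ?B"
    hence "real (hdist c y) \<le> real N - 1" by auto
    hence "0 \<le> h * (real N - 1 - hdist c y)" using h by (intro mult_nonneg_nonneg) auto
    hence "0 \<le> h * (real N - 1) + (- h * hdist c y)" by (simp add: algebra_simps)
    hence "1 \<le> exp (h * (real N - 1) + (- h * hdist c y))" by simp
    thus "1 \<le> exp (h * (real N - 1)) * exp (- (h * real (hdist c y)))" by (simp add: exp_add[symmetric])
  qed
  also have "\<dots> \<le> (\<Sum>y\<in>?V. exp (h * (real N - 1)) * exp (- (h * real (hdist c y))))"
    by (intro sum_mono2 fin) auto
  also have "\<dots> = exp (h * (real N - 1)) * (1 + (real CARD('a) - 1) * exp (-h)) ^ length c"
    by (simp add: sum_distrib_left[symmetric] sum_exp_hdist)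
  finally show ?thesis .
qed



lemma gv:
  fixes r N k :: nat and B :: real
  assumes ball: "\<And>c::'a::finite list. length c = r \<Longrightarrow> real (card {y. length y = r \<and> hdist c y < N}) \<le> B"
  and kB: "real k * B < real CARD('a)^r"
  shows "\<exists>C :: nat \<Rightarrow> 'a list. \<forall>v\<le>k. length (C v) = r \<and> (\<forall>v'\<le>k. v \<noteq> v' \<longrightarrow> N \<le> hdist (C v) (C v'))"
proof -
  let ?V = "{y :: 'a list. length y = r}"
  have finV: "finite ?V" using finite_lists_length_eq[of "UNIV :: 'a set"] by simp
  have cardV: "card ?V = CARD('a)^r" using card_lists_length_eq[of "UNIV :: 'a set"] by simp
  have B0: "B \<ge> 0" using ball[of "replicate r undefined"] by (smt (verit) of_nat_0_le_iff length_replicate)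
  have "\<forall>m. m \<le> Suc k \<longrightarrow> (\<exists>C :: nat \<Rightarrow> 'a list. \<forall>v<m. length (C v) = r \<and> (\<forall>v'<m. v \<noteq> v' \<longrightarrow> N \<le> hdist (C v) (C v')))"
  proof (intro allI)
    fix m show "m \<le> Suc k \<longrightarrow> (\<exists>C :: nat \<Rightarrow> 'a list. \<forall>v<m. length (C v) = r \<and> (\<forall>v'<m. v \<noteq> v' \<longrightarrow> N \<le> hdist (C v) (C v')))"
    proof (induction m)
      case 0 then show ?case by auto
    next
      case (Suc m)
      show ?case
      proof
        assume mk: "Suc m \<le> Suc k"
        then obtain C :: "nat \<Rightarrow> 'a list" where C: "\<forall>v<m. length (C v) = r \<and> (\<forall>v'<m. v \<noteq> v' \<longrightarrow> N \<le> hdist (C v) (C v'))"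
          using Suc.IH mk by (meson Suc_leD)
        define U where "U = (\<Union>v<m. {y. length y = r \<and> hdist (C v) y < N})"
        have UV: "U \<subseteq> ?V" unfolding U_def by auto
        have "real (card U) \<le> real (\<Sum>v<m. card {y. length y = r \<and> hdist (C v) y < N})"
          unfolding U_def using card_UN_le[of "{..<m}"] by (simp only: of_nat_le_iff) auto
        also have "\<dots> = (\<Sum>v<m. real (card {y. length y = r \<and> hdist (C v) y < N}))" by simp
        also have "\<dots> \<le> (\<Sum>v<m. B)" using C ball by (intro sum_mono) auto
        also have "\<dots> = real m * B" by simp
        also have "\<dots> \<le> real k * B" using mk B0 by (intro mult_right_mono) auto
        finally have "real (card U) < real CARD('a)^r" using kB by linarith
        hence "real (card U) < real (card ?V)" using cardV by simp
        hence "\<not> ?V \<subseteq> U" using card_mono[OF _ ] finV UV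
          by (metis card_mono finite_subset not_le of_nat_le_iff)
        then obtain y where y: "length y = r" "y \<notin> U" by auto
        have yfar: "N \<le> hdist (C v) y" if "v < m" for v
          using y that unfolding U_def by (auto simp: not_less)
        define C' where "C' = C(m := y)"
        have "\<forall>v<Suc m. length (C' v) = r \<and> (\<forall>v'<Suc m. v \<noteq> v' \<longrightarrow> N \<le> hdist (C' v) (C' v'))"
        proof (intro allI impI conjI)
          fix v assume "v < Suc m" then show "length (C' v) = r" using C y by (auto simp: C'_def less_Suc_eq)
        next
          fix v v' assume v: "v < Suc m" and v': "v' < Suc m" and ne: "v \<noteq> v'"
          show "N \<le> hdist (C' v) (C' v')"
          proof (cases "v = m")
            case True
            then have "v' < m" using v' ne by auto
            then show ?thesis using True yfar[of v'] hdist_sym[of y "C v'"] C y by (auto simp: C'_def)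
          next
            case False
            then have vm: "v < m" using v by auto
            show ?thesis
            proof (cases "v' = m")
              case True then show ?thesis using vm yfar by (auto simp: C'_def)
            next
              case False then show ?thesis using vm v' C ne \<open>v \<noteq> m\<close> by (auto simp: C'_def less_Suc_eq)
            qed
          qed
        qed
        then show "\<exists>C :: nat \<Rightarrow> 'a list. \<forall>v<Suc m. length (C v) = r \<and> (\<forall>v'<Suc m. v \<noteq> v' \<longrightarrow> N \<le> hdist (C v) (C v'))" by blast
      qed
    qed
  qed
  then obtain C :: "nat \<Rightarrow> 'a list" where "\<forall>v<Suc k. length (C v) = r \<and> (\<forall>v'<Suc k. v \<noteq> v' \<longrightarrow> N \<le> hdist (C v) (C v'))"
    by blast
  then show ?thesis by (auto simp: less_Suc_eq_le)
qed

lemma window: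
  fixes x1 x2 p1 p2 :: "'a list"
  assumes lx: "length x1 = k" "length x2 = k" and ne: "x1 \<noteq> x2"
    and lp: "length p1 = r" "length p2 = r" and hd: "hdist p1 p2 \<ge> N" and N: "N > 0"
    and b: "0 < b" "b \<le> k"
  shows "bsym_dist b (x1 @ p1) (x2 @ p2) \<ge> N + b"
proof -
  define n where "n = k + r"
  define z where "z = x1 @ p1"
  define w where "w = x2 @ p2"
  define S where "S = {i. i < n \<and> (\<exists>j<b. z ! ((i + j) mod n) \<noteq> w ! ((i + j) mod n))}"
  have dist: "bsym_dist b z w = card S" unfolding bsym_dist_def S_def n_def z_def w_def using lx lp by (simp add: Let_def)
  define D where "D = {d. d < r \<and> p1 ! d \<noteq> p2 ! d}"
  have cD: "card D \<ge> N" using hd lp unfolding hdist_def D_def by simp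
  have finD: "finite D" unfolding D_def by simp
  have "D \<noteq> {}" using cD N by auto
  define m0 where "m0 = Min D"
  have m0D: "m0 \<in> D" unfolding m0_def using finD \<open>D \<noteq> {}\<close> by simp
  have m0le: "\<And>d. d \<in> D \<Longrightarrow> m0 \<le> d" unfolding m0_def using finD by simp
  define m where "m = k + m0"
  obtain s0 where s0: "s0 < k" "x1 ! s0 \<noteq> x2 ! s0"
    using ne lx nth_equalityI by metis
  have zk: "z ! (k + d) = p1 ! d" "w ! (k + d) = p2 ! d" for d
    unfolding z_def w_def using lx by (auto simp: nth_append)
  have zs: "z ! s = x1 ! s" "w ! s = x2 ! s" if "s < k" for s
    unfolding z_def w_def using lx that by (auto simp: nth_append)
  have inS: "i \<in> S" if "i + j < n" "j < b" "z ! (i+j) \<noteq> w ! (i+j)" for i j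
    unfolding S_def using that by auto
  define A1 where "A1 = (+) k ` D"
  define A2 where "A2 = {m - b + 1..<m}"
  define e where "e = (if s0 < m - b then s0 else m - b)"
  have mn: "m < n" using m0D unfolding m_def n_def D_def by auto
  have "A1 \<subseteq> S"
  proof
    fix i assume "i \<in> A1"
    then obtain d where d: "d \<in> D" "i = k + d" unfolding A1_def by auto
    show "i \<in> S" using inS[of i 0] d zk b unfolding D_def n_def by auto
  qed
  moreover have "A2 \<subseteq> S"
  proof
    fix i assume i: "i \<in> A2"
    have "i + (m - i) = m" using i unfolding A2_def by auto
    moreover have "m - i < b" using i b unfolding A2_def by auto
    ultimately show "i \<in> S" using inS[of i "m - i"] mn zk[of m0] m0D unfolding m_def D_def by auto
  qed
  moreover have "e \<in> S"
  proof (cases "s0 < m - b")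
    case True
    then show ?thesis using inS[of s0 0] s0 zs[of s0] b unfolding e_def n_def by auto
  next
    case False
    have "m - b + (s0 - (m - b)) = s0" using False by auto
    moreover have "s0 - (m - b) < b" using s0 b unfolding m_def by auto
    ultimately show ?thesis using inS[of "m - b" "s0 - (m - b)"] False s0 zs[of s0] unfolding e_def n_def by auto
  qed
  ultimately have sub: "A1 \<union> A2 \<union> {e} \<subseteq> S" by auto
  have finS: "finite S" unfolding S_def by simp
  have A1m: "A1 \<subseteq> {m..}" unfolding A1_def m_def using m0le by auto
  have em: "e < m - b + 1" unfolding e_def by auto
  have mb: "m \<ge> b" using b unfolding m_def by auto
  have "card (A1 \<union> A2 \<union> {e}) = card A1 + card A2 + 1"
  proof -
    have d1: "A1 \<inter> A2 = {}" using A1m unfolding A2_def by auto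
    have fA1: "finite A1" unfolding A1_def using finD by simp
    have "card (A1 \<union> A2) = card A1 + card A2" using d1 fA1 by (simp add: card_Un_disjoint A2_def)
    moreover have "e \<notin> A1 \<union> A2" using A1m em mb b unfolding A2_def by auto
    moreover have "finite (A1 \<union> A2)" using fA1 unfolding A2_def by simp
    ultimately show ?thesis by simp
  qed
  moreover have "card A1 = card D" unfolding A1_def by (simp add: card_image)
  moreover have "card A2 = b - 1" unfolding A2_def using mb b by simp
  ultimately have "card (A1 \<union> A2 \<union> {e}) \<ge> N + b" using cD b by simp
  moreover have "card (A1 \<union> A2 \<union> {e}) \<le> card S" using card_mono[OF finS sub] .
  ultimately show ?thesis using dist unfolding z_def w_def by simp
qed



lemma bsym_wt_le: "bsym_wt b x \<le> length x"
proof -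
  have "bsym_wt b x = card {i. i < length x \<and> (\<exists>j<b. x ! ((i + j) mod length x) \<noteq> replicate (length x) 0 ! ((i + j) mod length x))}"
    unfolding bsym_wt_def bsym_dist_def by (simp add: Let_def)
  also have "\<dots> \<le> card {..<length x}" by (intro card_mono) auto
  finally show ?thesis by simp
qed

theorem mainTheorem18:
  fixes b k t q :: nat
  assumes "q = card (UNIV :: 'a set)"
    and "0 < b" and "0 < k" and "0 < t"
    and "real t \<ge> of_int \<lceil>(9 + real b) / 2\<rceil>"
    and "b \<le> k" and "k \<le> (2 * t - b + 1) ^ 2"
  shows "real (fc_bsym_redundancy TYPE('a::{finite,field}) b (bsym_wt b :: 'a list \<Rightarrow> nat) k t)
    \<le> real q * (2 * real t - real b) /
      (real q * (1 - sqrt (ln (2 * real t - real b + 1) / (2 * real t - real b + 1))) - 1)"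
proof -
  have q2: "q \<ge> 2"
  proof -
    have "card {0::'a, 1} = 2" by simp
    moreover have "card {0::'a, 1} \<le> card (UNIV :: 'a set)" by (intro card_mono) auto
    ultimately show ?thesis using assms(1) by simp
  qed
  have "real t \<ge> (9 + real b) / 2" using assms(5) by (meson le_of_int_ceiling order_trans)
  hence "real (9 + b) \<le> real (2 * t)" by simp
  hence tb: "2 * t \<ge> 9 + b" by (simp only: of_nat_le_iff)
  define Nn where "Nn = 2 * t - b + 1"
  have NnR: "real Nn = 2 * real t - real b + 1" using tb unfolding Nn_def by simp
  have N10: "2 * real t - real b + 1 \<ge> 10" using tb by simp
  have kN: "real k \<le> (2 * real t - real b + 1)^2"
  proof -
    have "real k \<le> real (Nn^2)" using assms(7) unfolding Nn_def by (simp only: of_nat_le_iff)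
    thus ?thesis using NnR by simp
  qed
  define R where "R = real q * (2 * real t - real b + 1 - 1) /
      (real q * (1 - sqrt (ln (2 * real t - real b + 1) / (2 * real t - real b + 1))) - 1)"
  define r where "r = nat \<lfloor>R\<rfloor>"
  have q2r: "real q \<ge> 2" using q2 by simp
  note kr = key_real[OF N10 q2r kN assms(3), folded R_def, OF r_def]
  obtain h where h: "h \<ge> 0" and hk: "real k * (exp (h*(2 * real t - real b + 1 - 1)) * (1+(real q-1)*exp(-h))^r) < real q^r"
    using kr(2) by blast
  define B where "B = exp (h*(2 * real t - real b + 1 - 1)) * (1+(real q-1)*exp(-h))^r"
  have ball: "real (card {y. length y = r \<and> hdist c y < Nn}) \<le> B" if "length c = r" for c :: "'a list"
    using ball_card[OF h, where N=Nn and c=c] that NnR assms(1) unfolding B_def by simp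
  have kB: "real k * B < real CARD('a)^r" using hk assms(1) unfolding B_def by simp
  obtain C :: "nat \<Rightarrow> 'a list" where C: "\<forall>v\<le>k. length (C v) = r \<and> (\<forall>v'\<le>k. v \<noteq> v' \<longrightarrow> Nn \<le> hdist (C v) (C v'))"
    using gv[where r=r and N=Nn and k=k and B=B, OF ball kB] by blast
  define p where "p = (\<lambda>x :: 'a list. C (bsym_wt b x))"
  have code: "is_fc_bsym_code b k t r (bsym_wt b :: 'a list \<Rightarrow> nat) p"
    unfolding is_fc_bsym_code_def
  proof (intro conjI allI impI)
    fix x :: "'a list" assume "length x = k"
    then show "length (p x) = r" using C bsym_wt_le[of b x] unfolding p_def by auto
  next
    fix x1 x2 :: "'a list" assume l1: "length x1 = k" and l2: "length x2 = k" and ne: "bsym_wt b x1 \<noteq> bsym_wt b x2"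
    have w1: "bsym_wt b x1 \<le> k" "bsym_wt b x2 \<le> k" using bsym_wt_le l1 l2 by metis+
    have "x1 \<noteq> x2" using ne by auto
    moreover have "Nn \<le> hdist (p x1) (p x2)" using C w1 ne unfolding p_def by auto
    moreover have "length (p x1) = r" "length (p x2) = r" using C w1 unfolding p_def by auto
    moreover have "Nn > 0" unfolding Nn_def by simp
    ultimately have "bsym_dist b (x1 @ p x1) (x2 @ p x2) \<ge> Nn + b"
      using window[OF l1 l2] assms(2,6) by blast
    moreover have "Nn + b = 2 * t + 1" unfolding Nn_def using tb by simp
    ultimately show "2 * t + 1 \<le> bsym_dist b (x1 @ p x1) (x2 @ p x2)" by simp
  qed
  have "fc_bsym_redundancy TYPE('a) b (bsym_wt b :: 'a list \<Rightarrow> nat) k t \<le> r"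
    unfolding fc_bsym_redundancy_def using code by (intro Least_le) blast
  hence "real (fc_bsym_redundancy TYPE('a) b (bsym_wt b :: 'a list \<Rightarrow> nat) k t) \<le> R"
    using kr(1) by linarith
  also have "R = real q * (2 * real t - real b) /
      (real q * (1 - sqrt (ln (2 * real t - real b + 1) / (2 * real t - real b + 1))) - 1)"
    unfolding R_def by simp
  finally show ?thesis .
qed

end
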